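(* Let $\mu_1,\mu_2\in(0,1)$ with $\mu_1>\mu_2$ and $(\sqrt{\mu_1}+\sqrt{\mu_2})^2< 1/2$, and let $\mathcal{H}_\mu(\rho)=H_0\rho H_0^\dagger+H_1\rho H_1^\dagger$ with $H_0=|0\rangle\langle0|+\sqrt{\mu}\,|1\rangle\langle1|$, $H_1=\sqrt{1-\mu}\,|0\rangle\langle1|$ be the qubit amplitude damping channel. Then for distinguishing $\mathcal{H}_{\mu_1}$ and $\mathcal{H}_{\mu_2}$, a maximally entangled probe is strictly better than every single-system probe: for every maximally entangled two-qubit state $|\Psi\rangle$, $$\tfrac12+\tfrac14\|(\mathcal{H}_{\mu_1}\otimes\mathrm{id})(|\Psi\rangle\langle\Psi|)-(\mathcal{H}_{\mu_2}\otimes\mathrm{id})(|\Psi\rangle\langle\Psi|)\|_1>\max_{\rho}\Big(\tfrac12+\tfrac14\|\mathcal{H}_{\mu_1}(\rho)-\mathcal{H}_{\mu_2}(\rho)\|_1\Big),$$ the maximum being over single-qubit states $\rho$.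
   Context: For two channels chosen with equal priors $1/2$, the single-shot success probability with a single-system probe $\rho$ is $\frac12+\frac14\|\mathcal{N}_1(\rho)-\mathcal{N}_2(\rho)\|_1$ and with a bipartite probe $\rho_{AB}$ (channel on $A$) it is $\frac12+\frac14\|(\mathcal{N}_1\otimes\mathrm{id})(\rho_{AB})-(\mathcal{N}_2\otimes\mathrm{id})(\rho_{AB})\|_1$; $\|\cdot\|_1$ is the trace norm. A two-qubit pure state is maximally entangled if its reduced states are $\mathbb{I}_2/2$. The paper assumes $\mu_1>\mu_2$ throughout its treatment of amplitude damping channels. *)

theory Defs
  imports Complex_Main "Jordan_Normal_Form.Schur_Decomposition"
begin

definition dagger :: "complex mat \<Rightarrow> complex mat" where
  "dagger A = mat (dim_col A) (dim_row A) (\<lambda>(i,j). cnj (A $$ (j,i)))"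

definition mtrace :: "complex mat \<Rightarrow> complex" where
  "mtrace A = (\<Sum>i<dim_row A. A $$ (i,i))"

definition psd :: "nat \<Rightarrow> complex mat \<Rightarrow> bool" where
  "psd n A \<longleftrightarrow> A \<in> carrier_mat n n \<and> dagger A = A \<and>
     (\<forall>v \<in> carrier_vec n. 0 \<le> Re (cscalar_prod (A *\<^sub>v v) v))"

definition trace_norm :: "complex mat \<Rightarrow> real" where
  "trace_norm A = Re (mtrace (THE B. psd (dim_col A) B \<and> B * B = dagger A * A))"

definition density :: "nat \<Rightarrow> complex mat \<Rightarrow> bool" where
  "density n \<rho> \<longleftrightarrow> psd n \<rho> \<and> mtrace \<rho> = 1"

(* Kronecker product, index ordering (i,k) \<mapsto> i * dim B + k *)
definition kron :: "complex mat \<Rightarrow> complex mat \<Rightarrow> complex mat" where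
  "kron A B = mat (dim_row A * dim_row B) (dim_col A * dim_col B)
     (\<lambda>(i,j). A $$ (i div dim_row B, j div dim_col B) * B $$ (i mod dim_row B, j mod dim_col B))"

definition H0 :: "real \<Rightarrow> complex mat" where
  "H0 \<mu> = mat 2 2 (\<lambda>(i,j). if i = 0 \<and> j = 0 then 1
                         else if i = 1 \<and> j = 1 then complex_of_real (sqrt \<mu>) else 0)"

definition H1 :: "real \<Rightarrow> complex mat" where
  "H1 \<mu> = mat 2 2 (\<lambda>(i,j). if i = 0 \<and> j = 1 then complex_of_real (sqrt (1 - \<mu>)) else 0)"

definition ampdamp :: "real \<Rightarrow> complex mat \<Rightarrow> complex mat" where
  "ampdamp \<mu> \<rho> = H0 \<mu> * \<rho> * dagger (H0 \<mu>) + H1 \<mu> * \<rho> * dagger (H1 \<mu>)"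

definition ampdamp_id :: "real \<Rightarrow> complex mat \<Rightarrow> complex mat" where
  "ampdamp_id \<mu> \<rho> =
     kron (H0 \<mu>) (1\<^sub>m 2) * \<rho> * dagger (kron (H0 \<mu>) (1\<^sub>m 2))
   + kron (H1 \<mu>) (1\<^sub>m 2) * \<rho> * dagger (kron (H1 \<mu>) (1\<^sub>m 2))"

definition proj :: "complex vec \<Rightarrow> complex mat" where
  "proj v = mat (dim_vec v) (dim_vec v) (\<lambda>(i,j). v $ i * cnj (v $ j))"

definition ptrace_B :: "complex mat \<Rightarrow> complex mat" where
  "ptrace_B \<rho> = mat 2 2 (\<lambda>(a,a'). \<Sum>b<2. \<rho> $$ (a*2+b, a'*2+b))"

definition ptrace_A :: "complex mat \<Rightarrow> complex mat" where
  "ptrace_A \<rho> = mat 2 2 (\<lambda>(b,b'). \<Sum>a<2. \<rho> $$ (a*2+b, a*2+b'))"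

definition max_entangled :: "complex vec \<Rightarrow> bool" where
  "max_entangled \<psi> \<longleftrightarrow> \<psi> \<in> carrier_vec 4 \<and> cscalar_prod \<psi> \<psi> = 1 \<and>
     ptrace_B (proj \<psi>) = (1/2) \<cdot>\<^sub>m 1\<^sub>m 2 \<and> ptrace_A (proj \<psi>) = (1/2) \<cdot>\<^sub>m 1\<^sub>m 2"

definition p_single :: "real \<Rightarrow> real \<Rightarrow> complex mat \<Rightarrow> real" where
  "p_single \<mu>1 \<mu>2 \<rho> = 1/2 + 1/4 * trace_norm (ampdamp \<mu>1 \<rho> - ampdamp \<mu>2 \<rho>)"

definition p_ent :: "real \<Rightarrow> real \<Rightarrow> complex mat \<Rightarrow> real" where
  "p_ent \<mu>1 \<mu>2 \<rho> = 1/2 + 1/4 * trace_norm (ampdamp_id \<mu>1 \<rho> - ampdamp_id \<mu>2 \<rho>)"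

end

theory Submission
  imports Defs
begin


lemma dagger_dims[simp]: "dim_row (dagger A) = dim_col A" "dim_col (dagger A) = dim_row A"
  by (auto simp: dagger_def)

lemma dagger_index[simp]: "i < dim_col A \<Longrightarrow> j < dim_row A \<Longrightarrow> dagger A $$ (i,j) = cnj (A $$ (j,i))"
  by (auto simp: dagger_def)

lemma dagger_carrier[simp]: "A \<in> carrier_mat n m \<Longrightarrow> dagger A \<in> carrier_mat m n"
  by auto

lemma dagger_mult: "A \<in> carrier_mat n m \<Longrightarrow> B \<in> carrier_mat m k \<Longrightarrow> dagger (A*B) = dagger B * dagger A"
  by (rule eq_matI) (auto simp: scalar_prod_def cnj_sum mult.commute)

lemma dagger_dagger[simp]: "dagger (dagger A) = A"
  by (rule eq_matI) auto

definition Qf :: "nat \<Rightarrow> complex mat \<Rightarrow> (nat \<Rightarrow> complex) \<Rightarrow> complex" where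
  "Qf n B x = (\<Sum>i<n. \<Sum>j<n. cnj (x i) * B $$ (i,j) * x j)"

lemma cscalar_Qf: assumes "B \<in> carrier_mat n n"
  shows "cscalar_prod (B *\<^sub>v vec n x) (vec n x) = Qf n B x"
  using assms by (auto simp: Qf_def scalar_prod_def sum_distrib_left sum_distrib_right lessThan_atLeast0 intro!: sum.cong)

lemma psd_Q: "psd n B \<Longrightarrow> 0 \<le> Re (Qf n B x)"
  unfolding psd_def using cscalar_Qf by (metis vec_carrier)

lemma psdI: "B \<in> carrier_mat n n \<Longrightarrow> dagger B = B \<Longrightarrow> (\<And>x. 0 \<le> Re (Qf n B x)) \<Longrightarrow> psd n B"
  unfolding psd_def
proof (intro conjI ballI)
  fix v :: "complex vec" assume B: "B \<in> carrier_mat n n" and v: "v \<in> carrier_vec n" and Q: "(\<And>x. 0 \<le> Re (Qf n B x))"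
  have "v = vec n (\<lambda>i. v $ i)" using v by auto
  then show "0 \<le> Re (cscalar_prod (B *\<^sub>v v) v)" using cscalar_Qf[OF B] Q by metis
qed auto

lemma psd_herm: "psd n B \<Longrightarrow> i < n \<Longrightarrow> j < n \<Longrightarrow> B $$ (j,i) = cnj (B $$ (i,j))"
  unfolding psd_def by (metis carrier_matD dagger_index)

lemma Qf_expand:
  fixes t :: real and x w :: "nat \<Rightarrow> complex"
  shows "Qf n B (\<lambda>k. x k - of_real t * w k) = Qf n B x
     - of_real t * ((\<Sum>i<n. \<Sum>j<n. cnj (x i) * B $$ (i,j) * w j) + (\<Sum>i<n. \<Sum>j<n. cnj (w i) * B $$ (i,j) * x j))
     + of_real (t^2) * Qf n B w"
proof -
  have e: "\<And>i j. cnj (x i - of_real t * w i) * B $$ (i,j) * (x j - of_real t * w j) =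
     cnj (x i) * B $$ (i,j) * x j - of_real t * (cnj (x i) * B $$ (i,j) * w j + cnj (w i) * B $$ (i,j) * x j)
     + of_real (t^2) * (cnj (w i) * B $$ (i,j) * w j)"
    by (simp add: algebra_simps power2_eq_square)
  show ?thesis unfolding Qf_def e
    by (simp only: sum.distrib sum_subtractf sum_distrib_left distrib_left)
qed

lemma psd_null:
  assumes B: "psd n B" and Q0: "Re (Qf n B x) = 0"
  shows "\<forall>i<n. (\<Sum>j<n. B $$ (i,j) * x j) = 0"
proof -
  define w where "w i = (\<Sum>j<n. B $$ (i,j) * x j)" for i
  define N where "N = (\<Sum>i<n. (cmod (w i))^2)"
  have S2: "(\<Sum>i<n. \<Sum>j<n. cnj (w i) * B $$ (i,j) * x j) = of_real N"
  proof -
    have "(\<Sum>i<n. \<Sum>j<n. cnj (w i) * B $$ (i,j) * x j) = (\<Sum>i<n. cnj (w i) * (\<Sum>j<n. B $$ (i,j) * x j))"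
      by (simp add: sum_distrib_left mult.assoc)
    also have "\<dots> = (\<Sum>i<n. w i * cnj (w i))" by (simp add: w_def mult.commute)
    also have "\<dots> = of_real N" unfolding N_def of_real_sum by (simp only: complex_norm_square)
    finally show ?thesis .
  qed
  have S1: "(\<Sum>i<n. \<Sum>j<n. cnj (x i) * B $$ (i,j) * w j) = of_real N"
  proof -
    have "(\<Sum>i<n. \<Sum>j<n. cnj (x i) * B $$ (i,j) * w j) = (\<Sum>j<n. \<Sum>i<n. cnj (x i) * B $$ (i,j) * w j)"
      by (rule sum.swap)
    also have "\<dots> = (\<Sum>j<n. w j * cnj (w j))"
    proof (rule sum.cong[OF refl])
      fix j assume j: "j \<in> {..<n}"
      have "cnj (w j) = (\<Sum>i<n. cnj (x i) * B $$ (i,j))"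
        unfolding w_def cnj_sum using psd_herm[OF B _ j[simplified]] by (auto intro!: sum.cong simp: mult.commute)
      moreover have "(\<Sum>i<n. cnj (x i) * B $$ (i,j) * w j) = (\<Sum>i<n. cnj (x i) * B $$ (i,j)) * w j"
        by (rule sum_distrib_right[symmetric])
      ultimately show "(\<Sum>i<n. cnj (x i) * B $$ (i,j) * w j) = w j * cnj (w j)"
        by (simp add: mult.commute)
    qed
    also have "\<dots> = of_real N" unfolding N_def of_real_sum by (simp only: complex_norm_square)
    finally show ?thesis .
  qed
  have Nge: "N \<ge> 0" unfolding N_def by (auto intro: sum_nonneg)
  define R where "R = Re (Qf n B w)"
  have Rge: "R \<ge> 0" unfolding R_def using psd_Q[OF B] .
  have key: "0 \<le> - 2 * t * N + t^2 * R" for t :: real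
  proof -
    have "0 \<le> Re (Qf n B (\<lambda>k. x k - of_real t * w k))" using psd_Q[OF B] .
    also have "\<dots> = - 2 * t * N + t^2 * R"
      unfolding Qf_expand S1 S2 R_def using Q0 by simp
    finally show ?thesis .
  qed
  have "N = 0"
  proof (rule ccontr)
    assume "N \<noteq> 0" then have Np: "N > 0" using Nge by simp
    define t where "t = N / (R + 1)"
    have tp: "t > 0" unfolding t_def using Np Rge by simp
    have "t * R < 2 * N" unfolding t_def using Np Rge
      by (simp add: field_simps) (smt (verit) mult_nonneg_nonneg)
    then have "t^2 * R < 2 * t * N" using tp by (simp add: power2_eq_square)
    then show False using key[of t] by simp
  qed
  then have "\<forall>i<n. cmod (w i) ^ 2 = 0"
    unfolding N_def by (subst (asm) sum_nonneg_eq_0_iff) auto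
  then show ?thesis unfolding w_def by simp
qed

lemma mm: "A \<in> carrier_mat n m \<Longrightarrow> B \<in> carrier_mat m k \<Longrightarrow> i < n \<Longrightarrow> j < k \<Longrightarrow>
  (A * B) $$ (i,j) = (\<Sum>l<m. A $$ (i,l) * B $$ (l,j))"
  by (simp add: scalar_prod_def lessThan_atLeast0)

lemma sum_cyc3: "(\<Sum>i<n. \<Sum>a<n. \<Sum>b<n. f i a b) = (\<Sum>a<n. \<Sum>b<n. \<Sum>i<n::nat. f i a b)"
proof -
  have "(\<Sum>i<n. \<Sum>a<n. \<Sum>b<n. f i a b) = (\<Sum>a<n. \<Sum>i<n. \<Sum>b<n. f i a b)" by (rule sum.swap)
  also have "\<dots> = (\<Sum>a<n. \<Sum>b<n. \<Sum>i<n. f i a b)" by (rule sum.cong[OF refl], rule sum.swap)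
  finally show ?thesis .
qed

lemma psd_unique:
  assumes B: "psd n B" and C: "psd n C" and BC: "B * B = C * C"
  shows "B = C"
proof -
  have Bc: "B \<in> carrier_mat n n" and Cc: "C \<in> carrier_mat n n" using B C unfolding psd_def by auto
  define d where "d i j = B $$ (i,j) - C $$ (i,j)" for i j
  have dh: "cnj (d j i) = d i j" if "i < n" "j < n" for i j
    unfolding d_def using psd_herm[OF B that(2,1)] psd_herm[OF C that(2,1)] by simp
  have s1: "(\<Sum>k<n. B $$ (i,k) * d k j) = - (\<Sum>k<n. d i k * C $$ (k,j))" if "i < n" "j < n" for i j
  proof -
    have "(B*B) $$ (i,j) = (C*C) $$ (i,j)" using BC by simp
    then have "(\<Sum>k<n. B $$ (i,k) * B $$ (k,j)) = (\<Sum>k<n. C $$ (i,k) * C $$ (k,j))"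
      using mm[OF Bc Bc that] mm[OF Cc Cc that] by simp
    then show ?thesis unfolding d_def
      by (simp add: algebra_simps sum_subtractf sum.distrib sum_negf[symmetric])
  qed
  define y where "y i = (\<lambda>k. d k i)" for i
  have QB: "Qf n B (y i) = (\<Sum>a<n. \<Sum>b<n. d i a * B $$ (a,b) * d b i)" if "i < n" for i
    unfolding Qf_def y_def using dh that by (auto intro!: sum.cong)
  have QC: "Qf n C (y i) = (\<Sum>a<n. \<Sum>b<n. d i a * C $$ (a,b) * d b i)" if "i < n" for i
    unfolding Qf_def y_def using dh that by (auto intro!: sum.cong)
  have "(\<Sum>i<n. Qf n B (y i)) = (\<Sum>i<n. \<Sum>a<n. d i a * (\<Sum>b<n. B $$ (a,b) * d b i))"
    using QB by (simp add: sum_distrib_left mult.assoc)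
  also have "\<dots> = - (\<Sum>i<n. \<Sum>a<n. \<Sum>b<n. d i a * d a b * C $$ (b,i))"
    using s1 by (simp add: sum_distrib_left mult.assoc sum_negf)
  also have "(\<Sum>i<n. \<Sum>a<n. \<Sum>b<n. d i a * d a b * C $$ (b,i)) = (\<Sum>i<n. Qf n C (y i))"
  proof -
    have "(\<Sum>i<n. Qf n C (y i)) = (\<Sum>i<n. \<Sum>a<n. \<Sum>b<n. d i a * C $$ (a,b) * d b i)"
      using QC by simp
    also have "\<dots> = (\<Sum>a<n. \<Sum>b<n. \<Sum>i<n. d i a * C $$ (a,b) * d b i)" by (rule sum_cyc3)
    also have "\<dots> = (\<Sum>b<n. \<Sum>i<n. \<Sum>a<n. d i a * d a b * C $$ (b,i))"
      by (simp add: ac_simps)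
    also have "\<dots> = (\<Sum>i<n. \<Sum>a<n. \<Sum>b<n. d i a * d a b * C $$ (b,i))"
      using sum_cyc3[of "\<lambda>i a b. d i a * d a b * C $$ (b,i)" n] sum_cyc3[of "\<lambda>a b i. d i a * d a b * C $$ (b,i)" n]
      by simp
    finally show ?thesis by simp
  qed
  finally have sum0: "(\<Sum>i<n. Qf n B (y i) + Qf n C (y i)) = 0" by (simp add: sum.distrib)
  have nnB: "\<forall>i\<in>{..<n}. 0 \<le> Re (Qf n B (y i))" using psd_Q[OF B] by auto
  have nnC: "\<forall>i\<in>{..<n}. 0 \<le> Re (Qf n C (y i))" using psd_Q[OF C] by auto
  have "(\<Sum>i<n. Re (Qf n B (y i)) + Re (Qf n C (y i))) = 0"
    using arg_cong[OF sum0, of Re] by (simp add: Re_sum)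
  then have "\<forall>i\<in>{..<n}. Re (Qf n B (y i)) + Re (Qf n C (y i)) = 0"
    by (subst (asm) sum_nonneg_eq_0_iff) (use nnB nnC in auto)
  then have z: "Re (Qf n B (y i)) = 0" "Re (Qf n C (y i)) = 0" if "i < n" for i
    using nnB nnC that by (metis add_nonneg_eq_0_iff lessThan_iff)+
  have BD: "(\<Sum>b<n. B $$ (a,b) * d b i) = 0" "(\<Sum>b<n. C $$ (a,b) * d b i) = 0" if "a < n" "i < n" for a i
    using psd_null[OF B z(1)[OF that(2)]] psd_null[OF C z(2)[OF that(2)]] that unfolding y_def by auto
  have "(\<Sum>b<n. d a b * d b i) = 0" if "a < n" "i < n" for a i
  proof -
    have "(\<Sum>b<n. d a b * d b i) = (\<Sum>b<n. B $$ (a,b) * d b i) - (\<Sum>b<n. C $$ (a,b) * d b i)"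
      unfolding d_def by (simp add: algebra_simps sum_subtractf)
    then show ?thesis using BD[OF that] by simp
  qed
  then have "(\<Sum>b<n. of_real ((cmod (d b i))^2) :: complex) = 0" if "i < n" for i
  proof -
    have "(\<Sum>b<n. of_real ((cmod (d b i))^2)) = (\<Sum>b<n. d i b * d b i)"
      using dh that by (intro sum.cong refl) (metis complex_norm_square lessThan_iff mult.commute)
    then show ?thesis using \<open>\<And>a i. a < n \<Longrightarrow> i < n \<Longrightarrow> (\<Sum>b<n. d a b * d b i) = 0\<close> that by simp
  qed
  then have "(\<Sum>b<n. (cmod (d b i))^2) = 0" if "i < n" for i
    using that by (metis of_real_eq_0_iff of_real_sum)
  then have "d b i = 0" if "b < n" "i < n" for b i
    using that by (subst (asm) sum_nonneg_eq_0_iff) auto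
  then show ?thesis using Bc Cc unfolding d_def by (intro eq_matI) auto
qed

lemma trace_norm_eq:
  assumes "dim_col A = n" "psd n B" "B * B = dagger A * A"
  shows "trace_norm A = Re (mtrace B)"
proof -
  have "(THE B. psd (dim_col A) B \<and> B * B = dagger A * A) = B"
    using assms psd_unique by (intro the_equality) auto
  then show ?thesis unfolding trace_norm_def by simp
qed

lemma adj_vec:
  assumes W: "W \<in> carrier_mat n m" and u: "u \<in> carrier_vec m" and v: "v \<in> carrier_vec n"
  shows "(W *\<^sub>v u) \<bullet>c v = u \<bullet>c (dagger W *\<^sub>v v)"
proof -
  have "(W *\<^sub>v u) \<bullet>c v = (\<Sum>i<n. (\<Sum>k<m. W $$ (i,k) * u $ k) * cnj (v $ i))"
    using W u v by (simp add: scalar_prod_def lessThan_atLeast0)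
  also have "\<dots> = (\<Sum>i<n. \<Sum>k<m. u $ k * (W $$ (i,k) * cnj (v $ i)))"
    by (simp add: sum_distrib_right sum_distrib_left ac_simps)
  also have "\<dots> = (\<Sum>k<m. \<Sum>i<n. u $ k * (W $$ (i,k) * cnj (v $ i)))" by (rule sum.swap)
  also have "\<dots> = u \<bullet>c (dagger W *\<^sub>v v)"
    using W u v by (simp add: scalar_prod_def lessThan_atLeast0 sum_distrib_left cnj_sum)
  finally show ?thesis .
qed

lemma psd_conj:
  assumes P: "psd n P" and W: "W \<in> carrier_mat n n"
  shows "psd n (W * P * dagger W)"
proof -
  have Pc: "P \<in> carrier_mat n n" and Ph: "dagger P = P" using P unfolding psd_def by auto
  have Wd: "dagger W \<in> carrier_mat n n" using W by simp
  have c: "W * P * dagger W \<in> carrier_mat n n" using Pc W Wd by (metis mult_carrier_mat)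
  have "dagger (W * P * dagger W) = dagger (dagger W) * dagger (W * P)"
    using dagger_mult[of "W * P" n n "dagger W" n] W Pc by simp
  also have "\<dots> = W * (P * dagger W)"
    using dagger_mult[OF W Pc] Ph by simp
  also have "\<dots> = W * P * dagger W" using assoc_mult_mat[OF W Pc Wd] by simp
  finally have h: "dagger (W * P * dagger W) = W * P * dagger W" .
  have q: "0 \<le> Re (((W * P * dagger W) *\<^sub>v v) \<bullet>c v)" if v: "v \<in> carrier_vec n" for v
  proof -
    have u: "dagger W *\<^sub>v v \<in> carrier_vec n" using Wd v by simp
    have "(W * P * dagger W) *\<^sub>v v = W *\<^sub>v (P *\<^sub>v (dagger W *\<^sub>v v))"
      using assoc_mult_mat_vec[OF mult_carrier_mat[OF W Pc] Wd v] assoc_mult_mat_vec[OF W Pc, of "dagger W *\<^sub>v v"] u by simp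
    then have "((W * P * dagger W) *\<^sub>v v) \<bullet>c v = (P *\<^sub>v (dagger W *\<^sub>v v)) \<bullet>c (dagger W *\<^sub>v v)"
      using adj_vec[OF W _ v, of "P *\<^sub>v (dagger W *\<^sub>v v)"] Pc u by simp
    then show ?thesis using P u unfolding psd_def by simp
  qed
  show ?thesis unfolding psd_def using c h q by blast
qed

lemma mtrace_comm: "A \<in> carrier_mat n m \<Longrightarrow> B \<in> carrier_mat m n \<Longrightarrow> mtrace (A * B) = mtrace (B * A)"
  unfolding mtrace_def
  by (simp add: scalar_prod_def lessThan_atLeast0 mult.commute) (rule sum.swap)

lemma mtrace_conj:
  assumes P: "P \<in> carrier_mat n n" and W: "W \<in> carrier_mat n n" and U: "dagger W * W = 1\<^sub>m n"
  shows "mtrace (W * P * dagger W) = mtrace P"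
proof -
  have "mtrace (W * P * dagger W) = mtrace (dagger W * (W * P))"
    using P W by (intro mtrace_comm[of _ n n]) auto
  also have "\<dots> = mtrace ((dagger W * W) * P)" using assoc_mult_mat[OF dagger_carrier[OF W] W P] by simp
  finally show ?thesis using U P by simp
qed




lemma less2: "(i::nat) < 2 \<longleftrightarrow> i = 0 \<or> i = 1" by auto
lemma less4: "(i::nat) < 4 \<longleftrightarrow> i = 0 \<or> i = 1 \<or> i = 2 \<or> i = 3" by auto

lemma sum2: "(\<Sum>i<2. f i) = f 0 + f (1::nat)" by (simp add: numeral_2_eq_2)
lemma sum4: "(\<Sum>i<4. f i) = f 0 + f 1 + f 2 + f (3::nat)" by (simp add: eval_nat_numeral)

lemma mat_mult_mat: "mat n m f * mat m k g = mat n k (\<lambda>(i,j). \<Sum>l<m. f (i,l) * g (l,j))"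
  by (rule eq_matI) (auto simp: scalar_prod_def lessThan_atLeast0)

lemma dagger_mat: "dagger (mat n m f) = mat m n (\<lambda>(i,j). cnj (f (j,i)))"
  by (rule eq_matI) auto

lemma mat_expand: "A \<in> carrier_mat n m \<Longrightarrow> A = mat n m (\<lambda>(i,j). A $$ (i,j))"
  by (rule eq_matI) auto

lemma ofr_sq: "0 \<le> x \<Longrightarrow> complex_of_real (sqrt x) * complex_of_real (sqrt x) = of_real x"
  by (simp flip: of_real_mult)

lemma ampdamp_mat:
  assumes r: "\<rho> = mat 2 2 r" and m: "0 \<le> \<mu>" "\<mu> \<le> 1"
  shows "ampdamp \<mu> \<rho> = mat 2 2 (\<lambda>(i,j).
     if i = 0 \<and> j = 0 then r (0,0) + of_real (1 - \<mu>) * r (1,1)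
     else if i = 0 \<and> j = 1 then of_real (sqrt \<mu>) * r (0,1)
     else if i = 1 \<and> j = 0 then of_real (sqrt \<mu>) * r (1,0)
     else of_real \<mu> * r (1,1))"
proof -
  have s1: "complex_of_real (sqrt \<mu>) * complex_of_real (sqrt \<mu>) = of_real \<mu>"
    using m(1) by (rule ofr_sq)
  have s3: "complex_of_real (sqrt (1-\<mu>)) * complex_of_real (sqrt (1-\<mu>)) = of_real (1 - \<mu>)"
    using m by (intro ofr_sq) simp
  show ?thesis
    unfolding ampdamp_def H0_def H1_def r dagger_mat mat_mult_mat sum2
    by (rule eq_matI) (auto simp: less2 s1 s3 algebra_simps)
qed

lemma mat_minus_mat: "mat n m f - mat n m g = mat n m (\<lambda>ij. f ij - g ij)"
  by (rule eq_matI) auto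

lemma tn2:
  fixes p :: real and z :: complex
  shows "trace_norm (mat 2 2 (\<lambda>(i,j). if i = 0 \<and> j = 0 then - of_real p else if i = 0 \<and> j = 1 then z
            else if i = 1 \<and> j = 0 then cnj z else of_real p)) = 2 * sqrt (p^2 + (cmod z)^2)"
proof -
  define k where "k = p^2 + (cmod z)^2"
  have k0: "k \<ge> 0" unfolding k_def by simp
  define B where "B = mat 2 2 (\<lambda>(i,j). if i = j then complex_of_real (sqrt k) else 0)"
  have psdB: "psd 2 B"
  proof (rule psdI)
    show "B \<in> carrier_mat 2 2" unfolding B_def by simp
    show "dagger B = B" unfolding B_def dagger_mat by (rule eq_matI) auto
    fix x
    have "Re (Qf 2 B x) = sqrt k * ((Re (x 0))^2 + (Im (x 0))^2 + (Re (x 1))^2 + (Im (x 1))^2)"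
      unfolding Qf_def B_def sum2 by (simp add: algebra_simps power2_eq_square)
    then show "0 \<le> Re (Qf 2 B x)" using k0 by simp
  qed
  have kk: "complex_of_real (sqrt k) * complex_of_real (sqrt k) = of_real p * of_real p + z * cnj z"
  proof -
    have "complex_of_real k = of_real p * of_real p + z * cnj z"
      unfolding k_def of_real_add complex_norm_square by (simp add: power2_eq_square)
    then show ?thesis using ofr_sq[OF k0] by simp
  qed
  have "B * B = dagger (mat 2 2 (\<lambda>(i,j). if i = 0 \<and> j = 0 then - of_real p else if i = 0 \<and> j = 1 then z
            else if i = 1 \<and> j = 0 then cnj z else of_real p)) * (mat 2 2 (\<lambda>(i,j). if i = 0 \<and> j = 0 then - of_real p else if i = 0 \<and> j = 1 then z
            else if i = 1 \<and> j = 0 then cnj z else of_real p))"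
    unfolding B_def dagger_mat mat_mult_mat sum2
    by (rule eq_matI) (auto simp: less2 kk algebra_simps)
  then have "trace_norm (mat 2 2 (\<lambda>(i,j). if i = 0 \<and> j = 0 then - of_real p else if i = 0 \<and> j = 1 then z
            else if i = 1 \<and> j = 0 then cnj z else of_real p)) = Re (mtrace B)"
    using psdB by (intro trace_norm_eq) auto
  also have "\<dots> = 2 * sqrt k" unfolding mtrace_def B_def sum2 by simp
  finally show ?thesis unfolding k_def .
qed

lemma real_ineq_single:
  fixes e s dd bb :: real
  assumes e: "e \<ge> 0" and s: "s^2 < 1/2" and bb: "bb \<le> dd - dd^2"
  shows "2 * sqrt ((e * s * dd)^2 + e^2 * bb) \<le> e / sqrt (1 - s^2)"
proof -
  define c where "c = 1 - s^2"
  have c: "c > 0" unfolding c_def using s by simp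
  define Y where "Y = (e * s * dd)^2 + e^2 * bb"
  have Y: "Y \<le> e^2 * (dd - c * dd^2)"
  proof -
    have "e^2 * bb \<le> e^2 * (dd - dd^2)" by (rule mult_left_mono[OF bb]) simp
    moreover have "e^2 * (dd - c * dd^2) = e^2 * (dd - dd^2) + (e * s * dd)^2"
      unfolding c_def by (simp add: algebra_simps power2_eq_square)
    ultimately show ?thesis unfolding Y_def by linarith
  qed
  have q: "4 * c * (dd - c * dd^2) \<le> 1"
    using zero_le_square[of "1 - 2 * c * dd"] by (simp add: algebra_simps power2_eq_square)
  have "4 * Y * c \<le> 4 * c * e^2 * (dd - c * dd^2)" using Y c by (simp add: mult.commute mult.left_commute)
  also have "\<dots> = e^2 * (4 * c * (dd - c * dd^2))" by (simp add: algebra_simps)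
  also have "\<dots> \<le> e^2" using q by (simp add: mult_left_le)
  finally have le: "4 * Y * c \<le> e^2" .
  have "2 * sqrt Y * sqrt c = sqrt (4 * Y * c)"
    by (simp add: real_sqrt_mult real_sqrt_four)
  also have "\<dots> \<le> sqrt (e^2)" using le by (rule real_sqrt_le_mono)
  also have "\<dots> = e" using e by simp
  finally have "2 * sqrt Y * sqrt c \<le> e" .
  then show ?thesis unfolding Y_def[symmetric] c_def[symmetric] using c
    by (simp add: pos_le_divide_eq)
qed

lemma ampdamp_diff_mat:
  assumes "0 \<le> \<mu>1" "\<mu>1 \<le> 1" "0 \<le> \<mu>2" "\<mu>2 \<le> 1"
  shows "ampdamp \<mu>1 (mat 2 2 r) - ampdamp \<mu>2 (mat 2 2 r) = mat 2 2 (\<lambda>(i,j).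
     if i = 0 \<and> j = 0 then - of_real (\<mu>1 - \<mu>2) * r (1,1)
     else if i = 0 \<and> j = 1 then of_real (sqrt \<mu>1 - sqrt \<mu>2) * r (0,1)
     else if i = 1 \<and> j = 0 then of_real (sqrt \<mu>1 - sqrt \<mu>2) * r (1,0)
     else of_real (\<mu>1 - \<mu>2) * r (1,1))"
  unfolding ampdamp_mat[OF refl assms(1,2)] ampdamp_mat[OF refl assms(3,4)] mat_minus_mat
  by (rule eq_matI) (auto simp: less2 algebra_simps)

lemma single_bound:
  assumes rho: "density 2 \<rho>" and m: "0 \<le> \<mu>2" "\<mu>2 \<le> \<mu>1" "\<mu>1 \<le> 1"
    and s: "(sqrt \<mu>1 + sqrt \<mu>2)^2 < 1/2"
  shows "trace_norm (ampdamp \<mu>1 \<rho> - ampdamp \<mu>2 \<rho>) \<le> (sqrt \<mu>1 - sqrt \<mu>2) / sqrt (1 - (sqrt \<mu>1 + sqrt \<mu>2)^2)"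
proof -
  have P: "psd 2 \<rho>" and tr: "mtrace \<rho> = 1" using rho unfolding density_def by auto
  have rc: "\<rho> \<in> carrier_mat 2 2" using P unfolding psd_def by auto
  define a where "a = Re (\<rho> $$ (0,0))"
  define dd where "dd = Re (\<rho> $$ (1,1))"
  define b where "b = \<rho> $$ (0,1)"
  have h01: "\<rho> $$ (0,1) = b" unfolding b_def by simp
  have h10: "\<rho> $$ (1,0) = cnj b" unfolding b_def using psd_herm[OF P, of 0 1] by simp
  have h00: "\<rho> $$ (0,0) = of_real a"
  proof -
    have "\<rho> $$ (0,0) = cnj (\<rho> $$ (0,0))" using psd_herm[OF P, of 0 0] by simp
    then show ?thesis unfolding a_def by (simp add: complex_eq_iff)
  qed
  have h11: "\<rho> $$ (1,1) = of_real dd"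
  proof -
    have "\<rho> $$ (1,1) = cnj (\<rho> $$ (1,1))" using psd_herm[OF P, of 1 1] by simp
    then show ?thesis unfolding dd_def by (simp add: complex_eq_iff)
  qed
  have ad: "a + dd = 1" using tr unfolding mtrace_def using rc h00 h11 by (simp add: sum2 complex_eq_iff)
  have q1: "0 \<le> Re (Qf 2 \<rho> (\<lambda>i. if i = 0 then b else - of_real a))" by (rule psd_Q[OF P])
  have q1e: "Re (Qf 2 \<rho> (\<lambda>i. if i = 0 then b else - of_real a)) = a * (a * dd - ((Re b)^2 + (Im b)^2))"
    unfolding Qf_def sum2 using h00 h11 h10 h01 by (simp add: algebra_simps power2_eq_square)
  have q2: "0 \<le> Re (Qf 2 \<rho> (\<lambda>i. if i = 0 then - of_real dd else cnj b))" by (rule psd_Q[OF P])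
  have q2e: "Re (Qf 2 \<rho> (\<lambda>i. if i = 0 then - of_real dd else cnj b)) = dd * (a * dd - ((Re b)^2 + (Im b)^2))"
    unfolding Qf_def sum2 using h00 h11 h10 h01 by (simp add: algebra_simps power2_eq_square)
  have X: "a * dd - ((Re b)^2 + (Im b)^2) \<ge> 0"
  proof -
    have "a * dd - ((Re b)^2 + (Im b)^2) = a * (a * dd - ((Re b)^2 + (Im b)^2)) + dd * (a * dd - ((Re b)^2 + (Im b)^2))"
      using ad by (metis distrib_right mult_1)
    then show ?thesis using q1 q1e q2 q2e by simp
  qed
  have bb: "(cmod b)^2 \<le> dd - dd^2"
  proof -
    have "(a + dd) * dd = dd" using ad by simp
    then have "a * dd = dd - dd^2" by (simp add: power2_eq_square algebra_simps)
    then show ?thesis using X cmod_power2[of b] by linarith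
  qed
  have r: "\<rho> = mat 2 2 (\<lambda>(i,j). \<rho> $$ (i,j))" using rc by (rule mat_expand)
  have m1: "0 \<le> \<mu>1" using m by simp
  have D: "ampdamp \<mu>1 \<rho> - ampdamp \<mu>2 \<rho> = mat 2 2 (\<lambda>(i,j). if i = 0 \<and> j = 0 then - of_real ((sqrt \<mu>1 - sqrt \<mu>2) * (sqrt \<mu>1 + sqrt \<mu>2) * dd)
       else if i = 0 \<and> j = 1 then of_real (sqrt \<mu>1 - sqrt \<mu>2) * b
            else if i = 1 \<and> j = 0 then cnj (of_real (sqrt \<mu>1 - sqrt \<mu>2) * b) else of_real ((sqrt \<mu>1 - sqrt \<mu>2) * (sqrt \<mu>1 + sqrt \<mu>2) * dd))"
  proof -
    have e: "(sqrt \<mu>1 - sqrt \<mu>2) * (sqrt \<mu>1 + sqrt \<mu>2) = \<mu>1 - \<mu>2"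
      using m by (simp add: algebra_simps)
    show ?thesis
      apply (subst (1 2) r)
      unfolding ampdamp_diff_mat[OF m1 m(3) m(1) order_trans[OF m(2,3)]] e[symmetric]
      using h00 h11 h10 h01 by (intro eq_matI) (auto simp: less2)
  qed
  have "trace_norm (ampdamp \<mu>1 \<rho> - ampdamp \<mu>2 \<rho>) =
      2 * sqrt (((sqrt \<mu>1 - sqrt \<mu>2) * (sqrt \<mu>1 + sqrt \<mu>2) * dd)^2 + (cmod (of_real (sqrt \<mu>1 - sqrt \<mu>2) * b))^2)"
    unfolding D by (rule tn2)
  also have "\<dots> = 2 * sqrt (((sqrt \<mu>1 - sqrt \<mu>2) * (sqrt \<mu>1 + sqrt \<mu>2) * dd)^2 + (sqrt \<mu>1 - sqrt \<mu>2)^2 * (cmod b)^2)"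
    by (simp add: norm_mult power_mult_distrib del: of_real_diff)
  also have "\<dots> \<le> (sqrt \<mu>1 - sqrt \<mu>2) / sqrt (1 - (sqrt \<mu>1 + sqrt \<mu>2)^2)"
    by (rule real_ineq_single[OF _ s bb]) (use m in simp)
  finally show ?thesis .
qed

lemma tn_conj:
  assumes W: "W \<in> carrier_mat n n" and X0: "X0 \<in> carrier_mat n n" and Pc: "P \<in> carrier_mat n n"
    and U: "dagger W * W = 1\<^sub>m n" and P: "psd n P" and PP: "P * P = dagger X0 * X0"
  shows "trace_norm (W * X0 * dagger W) = Re (mtrace P)"
proof -
  have Wd: "dagger W \<in> carrier_mat n n" using W by simp
  have X0d: "dagger X0 \<in> carrier_mat n n" using X0 by simp
  have cancel: "dagger W * (W * Z) = Z" if "Z \<in> carrier_mat n k" for Z k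
    using assoc_mult_mat[OF Wd W that] U that by simp
  have dX: "dagger (W * X0 * dagger W) = W * (dagger X0 * dagger W)"
  proof -
    have "dagger (W * X0 * dagger W) = dagger (dagger W) * dagger (W * X0)"
      using dagger_mult[OF mult_carrier_mat[OF W X0] Wd] .
    also have "\<dots> = W * (dagger X0 * dagger W)" using dagger_mult[OF W X0] by simp
    finally show ?thesis .
  qed
  have gen: "(W * (A * dagger W)) * (W * (C * dagger W)) = W * ((A * C) * dagger W)"
    if A: "A \<in> carrier_mat n n" and C: "C \<in> carrier_mat n n" for A C
  proof -
    have AW: "A * dagger W \<in> carrier_mat n n" using A Wd by simp
    have CW: "C * dagger W \<in> carrier_mat n n" using C Wd by simp
    have WCW: "W * (C * dagger W) \<in> carrier_mat n n" using W CW by simp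
    have "(W * (A * dagger W)) * (W * (C * dagger W)) = W * ((A * dagger W) * (W * (C * dagger W)))"
      by (rule assoc_mult_mat[OF W AW WCW])
    also have "(A * dagger W) * (W * (C * dagger W)) = A * (dagger W * (W * (C * dagger W)))"
      by (rule assoc_mult_mat[OF A Wd WCW])
    also have "dagger W * (W * (C * dagger W)) = C * dagger W" by (rule cancel[OF CW])
    also have "A * (C * dagger W) = (A * C) * dagger W" by (rule assoc_mult_mat[OF A C Wd, symmetric])
    finally show ?thesis .
  qed
  have e1: "(W * P * dagger W) * (W * P * dagger W) = W * ((P * P) * dagger W)"
    using gen[OF Pc Pc] assoc_mult_mat[OF W Pc Wd] by simp
  have e2: "dagger (W * X0 * dagger W) * (W * X0 * dagger W) = W * ((dagger X0 * X0) * dagger W)"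
    using gen[OF X0d X0] assoc_mult_mat[OF W X0 Wd] unfolding dX by simp
  have "trace_norm (W * X0 * dagger W) = Re (mtrace (W * P * dagger W))"
  proof (rule trace_norm_eq)
    show "dim_col (W * X0 * dagger W) = n" using W by simp
    show "psd n (W * P * dagger W)" by (rule psd_conj[OF P W])
    show "W * P * dagger W * (W * P * dagger W) = dagger (W * X0 * dagger W) * (W * X0 * dagger W)"
      by (simp only: e1 e2 PP)
  qed
  also have "\<dots> = Re (mtrace P)" using mtrace_conj[OF Pc W U] by simp
  finally show ?thesis .
qed

lemma kron_I2: "kron (mat 2 2 f) (1\<^sub>m 2) = mat 4 4 (\<lambda>(i,j). if i mod 2 = j mod 2 then f (i div 2, j div 2) else 0)"
  unfolding kron_def by (rule eq_matI) (auto simp: less_mult_imp_div_less)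




definition cf :: "real \<Rightarrow> nat \<Rightarrow> complex" where
  "cf \<mu> i = (if i < 2 then 1 else of_real (sqrt \<mu>))"

lemma kronH0: "kron (H0 \<mu>) (1\<^sub>m 2) = mat 4 4 (\<lambda>(i,j). if i = j then cf \<mu> i else 0)"
  unfolding H0_def kron_I2 
  apply (rule eq_matI)
  apply simp_all
  apply (simp add: less4)
  apply (elim disjE)
  apply (simp_all add: cf_def)
  done

lemma kronH1: "kron (H1 \<mu>) (1\<^sub>m 2) = mat 4 4 (\<lambda>(i,j). if j = i + 2 then of_real (sqrt (1 - \<mu>)) else 0)"
  unfolding H1_def kron_I2 
  apply (rule eq_matI)
  apply simp_all
  apply (simp add: less4)
  apply (elim disjE)
  apply simp_all
  done

lemma ampdamp_id_mat:
  assumes m: "0 \<le> \<mu>" "\<mu> \<le> 1"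
  shows "ampdamp_id \<mu> (mat 4 4 g) = mat 4 4 (\<lambda>(i,j). cf \<mu> i * cf \<mu> j * g (i,j)
     + (if i < 2 \<and> j < 2 then of_real (1 - \<mu>) * g (i+2, j+2) else 0))"
proof -
  have s3: "complex_of_real (sqrt (1-\<mu>)) * complex_of_real (sqrt (1-\<mu>)) = of_real (1 - \<mu>)"
    using m by (intro ofr_sq) simp
  have s3': "\<And>z. complex_of_real (sqrt (1-\<mu>)) * z * complex_of_real (sqrt (1-\<mu>)) = (1 - of_real \<mu>) * z"
    using s3 by (simp add: ac_simps)
  show ?thesis
    unfolding ampdamp_id_def kronH0 kronH1 dagger_mat mat_mult_mat
    apply (rule eq_matI)
    apply simp_all
    apply (simp add: less4)
    apply (elim disjE)
    apply (simp_all add: sum4 cf_def s3' numeral_2_eq_2 numeral_3_eq_3)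
    done
qed

definition Wm :: "complex vec \<Rightarrow> complex mat" where
  "Wm \<Psi> = mat 4 4 (\<lambda>(i,j). if i div 2 = j div 2 then of_real (sqrt 2) * \<Psi> $ (2 * (j mod 2) + i mod 2) else 0)"

definition X0m :: "real \<Rightarrow> real \<Rightarrow> complex mat" where
  "X0m \<mu>1 \<mu>2 = mat 4 4 (\<lambda>(i,j).
     if (i = 0 \<and> j = 3) \<or> (i = 3 \<and> j = 0) then of_real ((sqrt \<mu>1 - sqrt \<mu>2) / 2)
     else if i = 1 \<and> j = 1 then of_real (- (\<mu>1 - \<mu>2) / 2)
     else if i = 3 \<and> j = 3 then of_real ((\<mu>1 - \<mu>2) / 2) else 0)"

lemma X_eq:
  assumes m: "0 \<le> \<mu>1" "\<mu>1 \<le> 1" "0 \<le> \<mu>2" "\<mu>2 \<le> 1" and v: "\<Psi> \<in> carrier_vec 4"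
  shows "ampdamp_id \<mu>1 (proj \<Psi>) - ampdamp_id \<mu>2 (proj \<Psi>) = Wm \<Psi> * X0m \<mu>1 \<mu>2 * dagger (Wm \<Psi>)"
proof -
  have pr: "proj \<Psi> = mat 4 4 (\<lambda>(i,j). \<Psi> $ i * cnj (\<Psi> $ j))" using v unfolding proj_def by simp
  have f2: "(complex_of_real (sqrt 2)) * complex_of_real (sqrt 2) = 2" using ofr_sq[of 2] by simp
  have f2': "\<And>z. (complex_of_real (sqrt 2)) * (complex_of_real (sqrt 2) * z) = 2 * z" using f2 by (simp flip: mult.assoc)
  have f1: "complex_of_real (sqrt \<mu>1) * complex_of_real (sqrt \<mu>1) = of_real \<mu>1" using ofr_sq m by simp
  have f1': "complex_of_real (sqrt \<mu>2) * complex_of_real (sqrt \<mu>2) = of_real \<mu>2" using ofr_sq m by simp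
  show ?thesis
    unfolding pr ampdamp_id_mat[OF m(1,2)] ampdamp_id_mat[OF m(3,4)] mat_minus_mat Wm_def X0m_def dagger_mat mat_mult_mat
    apply (rule eq_matI)
    apply simp_all
    apply (simp add: less4)
    apply (elim disjE)
    apply (simp_all add: sum4 cf_def f1 f1')
    apply (simp_all add: ac_simps f2 f2' algebra_simps numeral_2_eq_2 numeral_3_eq_3)
    done
qed

lemma W_unitary:
  assumes v: "\<Psi> \<in> carrier_vec 4" and pt: "ptrace_B (proj \<Psi>) = (1/2) \<cdot>\<^sub>m 1\<^sub>m 2"
  shows "dagger (Wm \<Psi>) * Wm \<Psi> = 1\<^sub>m 4"
proof -
  have pr: "proj \<Psi> = mat 4 4 (\<lambda>(i,j). \<Psi> $ i * cnj (\<Psi> $ j))" using v unfolding proj_def by simp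
  have e: "ptrace_B (proj \<Psi>) $$ (a,b) = ((1/2) \<cdot>\<^sub>m 1\<^sub>m 2) $$ (a,b)" for a b using pt by simp
  have e00: "\<Psi> $ 0 * cnj (\<Psi> $ 0) + \<Psi> $ 1 * cnj (\<Psi> $ 1) = 1/2"
    using e[of 0 0] unfolding ptrace_B_def pr by (simp add: sum2)
  have e01: "\<Psi> $ 0 * cnj (\<Psi> $ 2) + \<Psi> $ 1 * cnj (\<Psi> $ 3) = 0"
    using e[of 0 1] unfolding ptrace_B_def pr by (simp add: sum2)
  have e11: "\<Psi> $ 2 * cnj (\<Psi> $ 2) + \<Psi> $ 3 * cnj (\<Psi> $ 3) = 1/2"
    using e[of 1 1] unfolding ptrace_B_def pr by (simp add: sum2)
  have f2: "(complex_of_real (sqrt 2)) * complex_of_real (sqrt 2) = 2" using ofr_sq[of 2] by simp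
  have f2': "\<And>z. (complex_of_real (sqrt 2)) * (complex_of_real (sqrt 2) * z) = 2 * z" using f2 by (simp flip: mult.assoc)
  have e10: "cnj (\<Psi> $ 0) * \<Psi> $ 2 + cnj (\<Psi> $ 1) * \<Psi> $ 3 = 0"
    using arg_cong[OF e01, of cnj] by (simp add: mult.commute)
  have e00': "2 * (\<Psi> $ 0 * cnj (\<Psi> $ 0)) + 2 * (\<Psi> $ 1 * cnj (\<Psi> $ 1)) = 1" using e00 by (simp add: field_simps)
  have e11': "2 * (\<Psi> $ 2 * cnj (\<Psi> $ 2)) + 2 * (\<Psi> $ 3 * cnj (\<Psi> $ 3)) = 1" using e11 by (simp add: field_simps)
  have e01': "2 * (\<Psi> $ 0 * cnj (\<Psi> $ 2)) + 2 * (\<Psi> $ 1 * cnj (\<Psi> $ 3)) = 0" using e01 by (metis distrib_left mult_zero_right)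
  have e10': "2 * (cnj (\<Psi> $ 0) * \<Psi> $ 2) + 2 * (cnj (\<Psi> $ 1) * \<Psi> $ 3) = 0" using e10 by (metis distrib_left mult_zero_right)
  note ee = e00' e01' e10' e11'
  note ee' = ee[unfolded numeral_2_eq_2 numeral_3_eq_3 One_nat_def]
  show ?thesis
    unfolding Wm_def dagger_mat mat_mult_mat
    apply (rule eq_matI)
    apply simp_all
    apply (simp add: less4)
    apply (elim disjE)
    apply (simp_all add: sum4)
    using ee' apply (simp_all add: ac_simps f2 f2' algebra_simps numeral_2_eq_2 numeral_3_eq_3)
    done
qed



definition Pg :: "real \<Rightarrow> real \<Rightarrow> real \<Rightarrow> real \<Rightarrow> complex mat" where
  "Pg A B C D = mat 4 4 (\<lambda>(i,j). of_real (if i = 0 \<and> j = 0 then A else if (i = 0 \<and> j = 3) \<or> (i = 3 \<and> j = 0) then B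
      else if i = 1 \<and> j = 1 then C else if i = 3 \<and> j = 3 then D else 0))"

definition X0g :: "real \<Rightarrow> real \<Rightarrow> real \<Rightarrow> complex mat" where
  "X0g E F G = mat 4 4 (\<lambda>(i,j). of_real (if (i = 0 \<and> j = 3) \<or> (i = 3 \<and> j = 0) then E
      else if i = 1 \<and> j = 1 then F else if i = 3 \<and> j = 3 then G else 0))"

lemma X0m_g: "X0m \<mu>1 \<mu>2 = X0g ((sqrt \<mu>1 - sqrt \<mu>2) / 2) (- (\<mu>1 - \<mu>2) / 2) ((\<mu>1 - \<mu>2) / 2)"
  unfolding X0m_def X0g_def by (rule eq_matI) auto

lemma PP_gen:
  assumes "A*A + B*B = E*E" "A*B + B*D = E*G" "C*C = F*F" "B*B + D*D = E*E + G*G"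
  shows "Pg A B C D * Pg A B C D = dagger (X0g E F G) * X0g E F G"
proof -
  have a: "complex_of_real A * of_real A + of_real B * of_real B = of_real E * of_real E"
    using arg_cong[OF assms(1), of complex_of_real] by simp
  have b: "complex_of_real A * of_real B + of_real B * of_real D = of_real E * of_real G"
    using arg_cong[OF assms(2), of complex_of_real] by simp
  have b': "complex_of_real B * of_real A + of_real D * of_real B = of_real G * of_real E"
    using b by (simp add: mult.commute)
  have c: "complex_of_real C * of_real C = of_real F * of_real F"
    using arg_cong[OF assms(3), of complex_of_real] by simp
  have d: "complex_of_real B * of_real B + of_real D * of_real D = of_real E * of_real E + of_real G * of_real G"
    using arg_cong[OF assms(4), of complex_of_real] by simp
  show ?thesis
    unfolding Pg_def X0g_def dagger_mat mat_mult_mat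
    apply (rule eq_matI)
    apply simp_all
    apply (simp add: less4)
    apply (elim disjE)
    apply (simp_all add: sum4 a b b' c d)
    done
qed

lemma quad_nonneg:
  fixes A B D a c :: real
  assumes "A \<ge> 0" "D \<ge> 0" "B*B \<le> A*D"
  shows "0 \<le> A*(a*a) + 2*B*(a*c) + D*(c*c)"
proof (cases "A = 0")
  case True
  then have "B = 0" using assms(3) by (metis mult_zero_left mult_eq_0_iff le_less not_square_less_zero)
  then show ?thesis using True assms(2) by simp
next
  case False
  then have Ap: "A > 0" using assms(1) by simp
  have "A * (A*(a*a) + 2*B*(a*c) + D*(c*c)) = (A*a + B*c)*(A*a + B*c) + (A*D - B*B)*(c*c)"
    by (simp add: algebra_simps)
  also have "\<dots> \<ge> 0" using assms(3) by (intro add_nonneg_nonneg) auto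
  finally show ?thesis using Ap by (simp add: zero_le_mult_iff)
qed

lemma psd_gen:
  assumes "A \<ge> 0" "C \<ge> 0" "D \<ge> 0" "B*B \<le> A*D"
  shows "psd 4 (Pg A B C D)"
proof (rule psdI)
  show "Pg A B C D \<in> carrier_mat 4 4" unfolding Pg_def by simp
  show "dagger (Pg A B C D) = Pg A B C D" unfolding Pg_def dagger_mat by (rule eq_matI) auto
  fix x
  have "Re (Qf 4 (Pg A B C D) x) =
     (A*(Re (x 0)*Re (x 0)) + 2*B*(Re (x 0)*Re (x 3)) + D*(Re (x 3)*Re (x 3)))
   + (A*(Im (x 0)*Im (x 0)) + 2*B*(Im (x 0)*Im (x 3)) + D*(Im (x 3)*Im (x 3)))
   + C * (Re (x 1)*Re (x 1) + Im (x 1)*Im (x 1))"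
    unfolding Qf_def Pg_def sum4 by simp (simp add: algebra_simps)
  also have "\<dots> \<ge> 0"
  proof -
    have "0 \<le> C * (Re (x 1)*Re (x 1) + Im (x 1)*Im (x 1))" using assms(2) by simp
    then show ?thesis using quad_nonneg[OF assms(1,3,4), of "Re (x 0)" "Re (x 3)"] quad_nonneg[OF assms(1,3,4), of "Im (x 0)" "Im (x 3)"]
      by linarith
  qed
  finally show "0 \<le> Re (Qf 4 (Pg A B C D) x)" .
qed

lemma tr_gen: "Re (mtrace (Pg A B C D)) = A + C + D"
  unfolding mtrace_def Pg_def by (simp add: sum4)

lemma ent_value:
  assumes me: "max_entangled \<Psi>" and m: "0 \<le> \<mu>2" "\<mu>2 < \<mu>1" "\<mu>1 \<le> 1"
  shows "trace_norm (ampdamp_id \<mu>1 (proj \<Psi>) - ampdamp_id \<mu>2 (proj \<Psi>))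
     = (\<mu>1 - \<mu>2) / 2 + sqrt ((\<mu>1 - \<mu>2)^2 + 4 * (sqrt \<mu>1 - sqrt \<mu>2)^2) / 2"
proof -
  have v: "\<Psi> \<in> carrier_vec 4" and pt: "ptrace_B (proj \<Psi>) = (1/2) \<cdot>\<^sub>m 1\<^sub>m 2"
    using me unfolding max_entangled_def by auto
  define e where "e = sqrt \<mu>1 - sqrt \<mu>2"
  define d where "d = \<mu>1 - \<mu>2"
  define r where "r = sqrt (d^2 + 4 * e^2)"
  have dp: "d > 0" unfolding d_def using m by simp
  have ep: "e \<ge> 0" unfolding e_def using m by simp
  have Kp: "d^2 + 4 * e^2 > 0" using dp by (simp add: add_pos_nonneg)
  have rp: "r > 0" unfolding r_def using Kp by simp
  have rr: "r * r = d^2 + 4 * e^2" unfolding r_def using Kp by simp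
  define A where "A = e^2 / r"
  define B where "B = e * d / (2 * r)"
  define C where "C = d / 2"
  define D where "D = (2 * e^2 + d^2) / (2 * r)"
  have m1: "0 \<le> \<mu>1" "\<mu>1 \<le> 1" "0 \<le> \<mu>2" "\<mu>2 \<le> 1" using m by auto
  have Xe: "ampdamp_id \<mu>1 (proj \<Psi>) - ampdamp_id \<mu>2 (proj \<Psi>) = Wm \<Psi> * X0g (e/2) (-d/2) (d/2) * dagger (Wm \<Psi>)"
    unfolding X_eq[OF m1 v] X0m_g e_def d_def by simp
  have i1: "A*A + B*B = (e/2)*(e/2)"
  proof -
    have "A*A + B*B = (e^2 * (4*e^2 + d^2) / 4) / (r*r)" unfolding A_def B_def using rp
      by (simp add: field_simps power2_eq_square)
    also have "\<dots> = (e/2)*(e/2)" unfolding rr using Kp by (simp add: field_simps power2_eq_square)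
    finally show ?thesis .
  qed
  have i2: "A*B + B*D = (e/2)*(d/2)"
  proof -
    have "A*B + B*D = (e * d * (4*e^2 + d^2) / 4) / (r*r)" unfolding A_def B_def D_def using rp
      by (simp add: field_simps power2_eq_square)
    also have "\<dots> = (e/2)*(d/2)" unfolding rr using Kp by (simp add: field_simps power2_eq_square)
    finally show ?thesis .
  qed
  have i3: "C*C = (-d/2)*(-d/2)" unfolding C_def by simp
  have i4: "B*B + D*D = (e/2)*(e/2) + (d/2)*(d/2)"
  proof -
    have "B*B + D*D = ((e^2 + d^2) * (4*e^2 + d^2) / 4) / (r*r)" unfolding B_def D_def using rp
      by (simp add: field_simps power2_eq_square)
    also have "\<dots> = (e/2)*(e/2) + (d/2)*(d/2)" unfolding rr using Kp by (simp add: field_simps power2_eq_square)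
    finally show ?thesis .
  qed
  have ps: "psd 4 (Pg A B C D)"
  proof (rule psd_gen)
    show "0 \<le> A" unfolding A_def using rp by simp
    show "0 \<le> C" unfolding C_def using dp by simp
    show "0 \<le> D" unfolding D_def using rp by simp
    have "B*B = (e^2 * d^2 / 4) / (r*r)" unfolding B_def by (simp add: field_simps power2_eq_square)
    also have "\<dots> \<le> (e^2 * (2 * e^2 + d^2) / 2) / (r*r)"
    proof (rule divide_right_mono)
      have "e^2 * (2 * e^2 + d^2) / 2 - e^2 * d^2 / 4 = e^2 * (4 * e^2 + d^2) / 4" by (simp add: field_simps)
      moreover have "0 \<le> e^2 * (4 * e^2 + d^2) / 4" by simp
      ultimately show "e^2 * d^2 / 4 \<le> e^2 * (2 * e^2 + d^2) / 2" by linarith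
    qed simp
    also have "\<dots> = A * D" unfolding A_def D_def by (simp add: field_simps power2_eq_square)
    finally show "B*B \<le> A*D" .
  qed
  have "trace_norm (ampdamp_id \<mu>1 (proj \<Psi>) - ampdamp_id \<mu>2 (proj \<Psi>)) = Re (mtrace (Pg A B C D))"
    unfolding Xe
  proof (rule tn_conj)
    show "Wm \<Psi> \<in> carrier_mat 4 4" unfolding Wm_def by simp
    show "X0g (e / 2) (- d / 2) (d / 2) \<in> carrier_mat 4 4" unfolding X0g_def by simp
    show "Pg A B C D \<in> carrier_mat 4 4" unfolding Pg_def by simp
    show "dagger (Wm \<Psi>) * Wm \<Psi> = 1\<^sub>m 4" by (rule W_unitary[OF v pt])
    show "psd 4 (Pg A B C D)" by (rule ps)
    show "Pg A B C D * Pg A B C D = dagger (X0g (e / 2) (- d / 2) (d / 2)) * X0g (e / 2) (- d / 2) (d / 2)"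
      using i1 i2 i3 i4 by (rule PP_gen)
  qed
  also have "\<dots> = A + C + D" by (rule tr_gen)
  also have "\<dots> = d/2 + r/2"
  proof -
    have "A + D = (4*e^2 + d^2) / (2*r)" unfolding A_def D_def using rp by (simp add: field_simps)
    also have "\<dots> = (r*r) / (2*r)" using rr by simp
    also have "\<dots> = r/2" using rp by simp
    finally show ?thesis unfolding C_def by simp
  qed
  finally show ?thesis unfolding d_def r_def e_def .
qed

lemma final_ineq:
  fixes e s :: real
  assumes e: "e > 0" and s: "s > 0" and s2: "s^2 < 1/2"
  shows "e / sqrt (1 - s^2) < (e * s) / 2 + sqrt ((e * s)^2 + 4 * e^2) / 2"
proof -
  define c where "c = 1 - s^2"
  define g where "g = sqrt (s^2 + 4)"
  have c: "c > 0" unfolding c_def using s2 by simp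
  have g4: "0 < s^2 + 4" by (smt (verit) zero_le_power2)
  have g: "g > 0" unfolding g_def using g4 by simp
  have gg: "g * g = s^2 + 4" unfolding g_def by (simp add: add_nonneg_nonneg)
  have poly: "(s^2 + 4) * (c * c) - (s * (1 + s^2))^2 = 4 - 8 * s^2"
    unfolding c_def by (simp add: algebra_simps power2_eq_square)
  have "(s * (1 + s^2))^2 < (g * c)^2"
    using poly s2 gg by (simp add: power2_eq_square algebra_simps)
  then have gc: "s * (1 + s^2) < g * c"
    using g c by (meson power2_less_imp_less mult_pos_pos less_imp_le)
  have "4 < c * ((s + g) * (s + g))"
  proof -
    have "c * ((s + g) * (s + g)) = c * (2 * s^2 + 4) + 2 * s * (g * c)"
      using gg by (simp add: algebra_simps power2_eq_square)
    also have "\<dots> > c * (2 * s^2 + 4) + 2 * s * (s * (1 + s^2))"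
      using gc s by simp
    also have "c * (2 * s^2 + 4) + 2 * s * (s * (1 + s^2)) = 4"
      unfolding c_def by (simp add: algebra_simps power2_eq_square)
    finally show ?thesis .
  qed
  then have "2 < sqrt (c * ((s + g) * (s + g)))" by (intro real_less_rsqrt) (simp add: power2_eq_square)
  also have "\<dots> = sqrt c * (s + g)" using g s by (simp add: real_sqrt_mult)
  finally have two: "2 < sqrt c * (s + g)" .
  have sq: "sqrt ((e * s)^2 + 4 * e^2) = e * g"
  proof -
    have "(e * s)^2 + 4 * e^2 = e^2 * (s^2 + 4)" by (simp add: algebra_simps power2_eq_square)
    then show ?thesis unfolding g_def using e by (simp add: real_sqrt_mult)
  qed
  have scp: "sqrt c > 0" using c by simp
  have m2: "e * 2 < e * (sqrt c * (s + g))" using mult_strict_left_mono[OF two e] by simp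
  have "e < e * (s + g) / 2 * sqrt c"
  proof -
    have "e * (s + g) / 2 * sqrt c = (e * (sqrt c * (s + g))) / 2" by (simp add: algebra_simps)
    then show ?thesis using m2 by (simp add: mult.commute mult.left_commute)
  qed
  then have "e / sqrt c < e * (s + g) / 2"
    using scp by (simp add: pos_divide_less_eq)
  then show ?thesis unfolding sq c_def[symmetric] by (simp add: field_simps)
qed

lemma density_exists: "density 2 (mat 2 2 (\<lambda>(i,j). if i = 0 \<and> j = 0 then 1 else 0))"
  unfolding density_def
proof
  show "psd 2 (mat 2 2 (\<lambda>(i,j). if i = 0 \<and> j = 0 then 1 else 0))"
  proof (rule psdI)
    show "dagger (mat 2 2 (\<lambda>(i,j). if i = 0 \<and> j = 0 then 1 else 0)) = mat 2 2 (\<lambda>(i,j). if i = 0 \<and> j = 0 then 1 else 0)"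
      unfolding dagger_mat by (rule eq_matI) auto
    fix x
    show "0 \<le> Re (Qf 2 (mat 2 2 (\<lambda>(i,j). if i = 0 \<and> j = 0 then 1 else 0)) x)"
      unfolding Qf_def sum2 by simp
  qed simp
  show "mtrace (mat 2 2 (\<lambda>(i,j). if i = 0 \<and> j = 0 then 1 else 0)) = 1"
    unfolding mtrace_def sum2 by simp
qed

theorem theorem6:
  fixes \<mu>1 \<mu>2 :: real and \<Psi> :: "complex vec"
  assumes "0 < \<mu>1" "\<mu>1 < 1" "0 < \<mu>2" "\<mu>2 < 1" "\<mu>1 > \<mu>2"
    and "(sqrt \<mu>1 + sqrt \<mu>2)^2 < 1/2"
    and "max_entangled \<Psi>"
  shows "p_ent \<mu>1 \<mu>2 (proj \<Psi>) > (SUP \<rho>\<in>{\<rho>. density 2 \<rho>}. p_single \<mu>1 \<mu>2 \<rho>)"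
proof -
  define e where "e = sqrt \<mu>1 - sqrt \<mu>2"
  define s where "s = sqrt \<mu>1 + sqrt \<mu>2"
  have ep: "e > 0" unfolding e_def using assms by simp
  have sp: "s > 0" unfolding s_def using assms by (simp add: add_pos_pos)
  have s2: "s^2 < 1/2" unfolding s_def using assms by simp
  have ds: "\<mu>1 - \<mu>2 = e * s" unfolding e_def s_def using assms by (simp add: algebra_simps)
  have "(SUP \<rho>\<in>{\<rho>. density 2 \<rho>}. p_single \<mu>1 \<mu>2 \<rho>) \<le> 1/2 + 1/4 * (e / sqrt (1 - s^2))"
  proof (rule cSUP_least)
    show "{\<rho>. density 2 \<rho>} \<noteq> {}" using density_exists by blast
    fix \<rho> assume "\<rho> \<in> {\<rho>. density 2 \<rho>}"
    then have "trace_norm (ampdamp \<mu>1 \<rho> - ampdamp \<mu>2 \<rho>) \<le> e / sqrt (1 - s^2)"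
      unfolding e_def s_def using assms by (intro single_bound) auto
    then show "p_single \<mu>1 \<mu>2 \<rho> \<le> 1/2 + 1/4 * (e / sqrt (1 - s^2))"
      unfolding p_single_def by simp
  qed
  also have "\<dots> < 1/2 + 1/4 * ((e * s) / 2 + sqrt ((e * s)^2 + 4 * e^2) / 2)"
    using final_ineq[OF ep sp s2] by simp
  also have "\<dots> = p_ent \<mu>1 \<mu>2 (proj \<Psi>)"
    unfolding p_ent_def using ent_value[OF assms(7), of \<mu>2 \<mu>1] assms ds e_def by simp
  finally show ?thesis .
qed


end
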